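(* Let $f_{s_1d}, f_{s_1r}, f_{rd}, g_{rd}^{s_1}, g_{s_1d}^{r}\in[0,1]$ satisfy $0\le g_{s_1d}^{r}\le f_{s_1d}$, $0\le g_{rd}^{s_1}< f_{rd}$, set $T_1=(1-f_{s_1d})f_{s_1r}$, and assume $T_1+f_{s_1d}>0$ and $T_1+g_{rd}^{s_1}>0$. For $\beta\in[0,1]$ define $$\mu_1^{\mathrm{SBC}}(\beta)=(1-\beta)(f_{s_1d}+T_1)+\beta\,g_{s_1d}^{r},\qquad \mu_{u_1}^{\mathrm{SBC}}(\beta)=\frac{f_{rd}}{(1-\beta)T_1+f_{rd}-\beta\,g_{rd}^{s_1}}\,\mu_1^{\mathrm{SBC}}(\beta).$$ If $$f_{rd}-g_{rd}^{s_1}\le \frac{g_{s_1d}^{r}(T_1+f_{rd})}{T_1+f_{s_1d}},$$ then $$\max_{0\le\beta\le 1}\min\{\mu_1^{\mathrm{SBC}}(\beta),\mu_{u_1}^{\mathrm{SBC}}(\beta)\}=\Big(1-\frac{T_1}{T_1+g_{rd}^{s_1}}\Big)(f_{s_1d}+T_1)+\frac{T_1}{T_1+g_{rd}^{s_1}}\,g_{s_1d}^{r},$$ attained at $\beta^*=T_1/(T_1+g_{rd}^{s_1})$.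
   Context: $f_{mn}$ denotes the probability that link $(m,n)$ is not in outage and $g_{mn}^{I}$ the probability that it is not in outage under simultaneous interference from node $I$ (so $g_{mn}^I\le f_{mn}$). This is the optimization of the maximal stable throughput of a single source $s_1$ in the sensing-based cooperative scheme over the probability $\beta$ that the relay transmits during a busy slot. *)

theory Defs
  imports Complex_Main
begin

definition T1 :: "real \<Rightarrow> real \<Rightarrow> real" where
  "T1 fsd fsr = (1 - fsd) * fsr"

definition mu1_SBC :: "real \<Rightarrow> real \<Rightarrow> real \<Rightarrow> real \<Rightarrow> real" where
  "mu1_SBC fsd fsr gsdr \<beta> = (1 - \<beta>) * (fsd + T1 fsd fsr) + \<beta> * gsdr"

definition muu1_SBC :: "real \<Rightarrow> real \<Rightarrow> real \<Rightarrow> real \<Rightarrow> real \<Rightarrow> real \<Rightarrow> real" where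
  "muu1_SBC fsd fsr frd grds gsdr \<beta> =
     frd / ((1 - \<beta>) * T1 fsd fsr + frd - \<beta> * grds) * mu1_SBC fsd fsr gsdr \<beta>"

end

theory Submission
  imports Defs
begin

theorem lemma1:
  fixes fsd fsr frd grds gsdr :: real
  assumes "0 \<le> fsd" "fsd \<le> 1" "0 \<le> fsr" "fsr \<le> 1" "0 \<le> frd" "frd \<le> 1"
    and "0 \<le> grds" "grds \<le> 1" "0 \<le> gsdr" "gsdr \<le> 1"
    and "gsdr \<le> fsd" "grds < frd"
    and "T1 fsd fsr + fsd > 0" "T1 fsd fsr + grds > 0"
    and "frd - grds \<le> gsdr * (T1 fsd fsr + frd) / (T1 fsd fsr + fsd)"
  defines "\<beta>s \<equiv> T1 fsd fsr / (T1 fsd fsr + grds)"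
  defines "V \<equiv> (1 - \<beta>s) * (fsd + T1 fsd fsr) + \<beta>s * gsdr"
  shows "0 \<le> \<beta>s \<and> \<beta>s \<le> 1
    \<and> min (mu1_SBC fsd fsr gsdr \<beta>s) (muu1_SBC fsd fsr frd grds gsdr \<beta>s) = V
    \<and> (\<forall>\<beta>\<in>{0..1}. min (mu1_SBC fsd fsr gsdr \<beta>) (muu1_SBC fsd fsr frd grds gsdr \<beta>) \<le> V)"
proof -
  define t where "t = T1 fsd fsr"
  have t0: "t \<ge> 0" using assms(2,3) by (simp add: t_def T1_def)
  define A where "A = fsd + t"
  define B where "B = A - gsdr"
  define E where "E = t + grds"
  have E0: "E > 0" using assms(14) by (simp add: E_def t_def)
  have B0: "B \<ge> 0" using assms(11) t0 by (simp add: B_def A_def)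
  have bs: "\<beta>s = t / E" by (simp add: \<beta>s_def E_def t_def)
  have bE: "\<beta>s * E = t" using E0 by (simp add: bs)
  have b0: "0 \<le> \<beta>s" using t0 E0 by (simp add: bs)
  have tE: "t \<le> E" using assms(7) by (simp add: E_def)
  have b1: "\<beta>s \<le> 1" using tE E0 by (simp add: bs)
  have pos: "t + fsd > 0" using assms(13) by (simp add: t_def)
  have key0: "(frd - grds) * (t + fsd) \<le> gsdr * (t + frd)"
    using assms(15) pos by (simp add: t_def[symmetric] pos_le_divide_eq)
  have Vdef: "V = A - \<beta>s * B" by (simp add: V_def A_def B_def t_def algebra_simps)
  have key: "frd * B \<le> V * E"
  proof -
    have "V * E = A * E - (\<beta>s * E) * B" unfolding Vdef by (simp add: algebra_simps)
    hence VE: "V * E = A * E - t * B" by (simp only: bE)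
    have "(frd + t) * B \<le> A * E" using key0 unfolding A_def B_def E_def by (simp add: algebra_simps)
    thus ?thesis using VE by (simp add: algebra_simps)
  qed
  have mu: "\<And>\<beta>. mu1_SBC fsd fsr gsdr \<beta> = A - \<beta> * B"
    by (simp add: mu1_SBC_def A_def B_def t_def algebra_simps)
  have mu_u: "\<And>\<beta>. muu1_SBC fsd fsr frd grds gsdr \<beta> = frd / (t + frd - \<beta> * E) * (A - \<beta> * B)"
    by (simp add: muu1_SBC_def mu E_def t_def algebra_simps)
  have frd0: "frd > 0" using assms(7,12) by linarith
  have Ds: "t + frd - \<beta>s * E = frd" using bE by simp
  have part2: "min (mu1_SBC fsd fsr gsdr \<beta>s) (muu1_SBC fsd fsr frd grds gsdr \<beta>s) = V"
    using frd0 by (simp add: mu mu_u Ds Vdef)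
  have part3: "min (mu1_SBC fsd fsr gsdr \<beta>) (muu1_SBC fsd fsr frd grds gsdr \<beta>) \<le> V"
    if "\<beta> \<in> {0..1}" for \<beta>
  proof (cases "\<beta>s \<le> \<beta>")
    case True
    have "\<beta>s * B \<le> \<beta> * B" using True B0 by (simp add: mult_right_mono)
    hence "mu1_SBC fsd fsr gsdr \<beta> \<le> V" by (simp add: mu Vdef)
    thus ?thesis by simp
  next
    case False
    have "\<beta> * E < \<beta>s * E" using False E0 by simp
    hence Dp: "t + frd - \<beta> * E > 0" using bE frd0 by linarith
    have id: "V * (t + frd - \<beta> * E) - frd * (A - \<beta> * B) = (\<beta>s - \<beta>) * (V * E - frd * B)"
    proof -
      have "V * (t + frd - \<beta> * E) - frd * (A - \<beta> * B) = V * (\<beta>s * E + frd - \<beta> * E) - frd * (A - \<beta> * B)" using bE by simp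
      also have "... = (\<beta>s - \<beta>) * (V * E - frd * B)" unfolding Vdef by (simp add: algebra_simps)
      finally show ?thesis .
    qed
    have "(\<beta>s - \<beta>) * (V * E - frd * B) \<ge> 0" using False key by simp
    hence "frd * (A - \<beta> * B) \<le> V * (t + frd - \<beta> * E)" using id by linarith
    hence "frd / (t + frd - \<beta> * E) * (A - \<beta> * B) \<le> V"
      using Dp by (simp add: pos_divide_le_eq mult.commute)
    thus ?thesis by (simp add: mu_u)
  qed
  show ?thesis using b0 b1 part2 part3 by blast
qed

end
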